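(* Let $\mathcal{H}$ be an effective ample second countable Hausdorff groupoid with $\mathcal{H}^{(0)}$ a locally compact Cantor space. Then $\mathcal{H}$ embeds into $\mathcal{G}_{E_2}$ if and only if $\mathcal{H}\times\mathcal{R}$ embeds into $\mathcal{G}_{E_2}$.
   Context: "Embeds" means there is an injective étale homomorphism (groupoid homomorphism that is a local homeomorphism). Ample: étale with unit space Hausdorff with a basis of compact open sets; effective: interior of the isotropy $\{g:s(g)=r(g)\}$ equals the unit space. A locally compact Cantor space is a non-empty second countable Hausdorff space with a basis of compact open sets and no isolated points. $\mathcal{R}=\mathbb{N}\times\mathbb{N}$ with the discrete topology, $(k,m)(m,n)=(k,n)$, $(m,n)^{-1}=(n,m)$; $\mathcal{H}\times\mathcal{R}$ is the product groupoid. $E_2$ is the graph with one vertex $v$ and two loops $a,b$; $E_2^\infty$ is the space of infinite words in $\{a,b\}$ with the cylinder topology, $\sigma$ the shift, and $\mathcal{G}_{E_2}=\{(x,m-n,y):x,y\in E_2^\infty, m,n\ge0,\sigma^m(x)=\sigma^n(y)\}$ with $(x,k,y)(y,l,z)=(x,k+l,z)$, $(x,k,y)^{-1}=(y,-k,x)$, topology generated by $\{(x,m-n,y):x\in U,y\in V,\sigma^m(x)=\sigma^n(y)\}$ for open $U,V$ on which $\sigma^m,\sigma^n$ are injective with $\sigma^m(U)=\sigma^n(V)$. *)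

theory Defs
  imports "HOL-Analysis.Analysis"
begin

text \<open>Composition cmp g h is meant to be g h,
  defined when dom g = cod h (i.e. s(g) = r(h)). dom = source map s,
  cod = range map r; both map arrows to units (identity arrows).\<close>

record 'a tgpd =
  arr :: "'a set"
  dom :: "'a \<Rightarrow> 'a"
  cod :: "'a \<Rightarrow> 'a"
  cmp :: "'a \<Rightarrow> 'a \<Rightarrow> 'a"
  iv  :: "'a \<Rightarrow> 'a"
  gtop :: "'a topology"

definition units :: "('a, 'b) tgpd_scheme \<Rightarrow> 'a set" where
  "units G = dom G ` arr G"

definition composable :: "('a, 'b) tgpd_scheme \<Rightarrow> ('a \<times> 'a) set" where
  "composable G = {(g, h). g \<in> arr G \<and> h \<in> arr G \<and> dom G g = cod G h}"

definition is_groupoid :: "('a, 'b) tgpd_scheme \<Rightarrow> bool" where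
  "is_groupoid G \<longleftrightarrow>
     (\<forall>g\<in>arr G. dom G g \<in> arr G \<and> cod G g \<in> arr G \<and> iv G g \<in> arr G) \<and>
     (\<forall>g\<in>arr G. dom G (dom G g) = dom G g \<and> cod G (dom G g) = dom G g \<and>
                 dom G (cod G g) = cod G g \<and> cod G (cod G g) = cod G g) \<and>
     (\<forall>(g, h)\<in>composable G. cmp G g h \<in> arr G \<and>
          dom G (cmp G g h) = dom G h \<and> cod G (cmp G g h) = cod G g) \<and>
     (\<forall>g\<in>arr G. \<forall>h\<in>arr G. \<forall>k\<in>arr G. dom G g = cod G h \<and> dom G h = cod G k \<longrightarrow>
          cmp G (cmp G g h) k = cmp G g (cmp G h k)) \<and>
     (\<forall>g\<in>arr G. cmp G (cod G g) g = g \<and> cmp G g (dom G g) = g) \<and>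
     (\<forall>g\<in>arr G. dom G (iv G g) = cod G g \<and> cod G (iv G g) = dom G g \<and>
          cmp G (iv G g) g = dom G g \<and> cmp G g (iv G g) = cod G g)"

definition is_tgroupoid :: "('a, 'b) tgpd_scheme \<Rightarrow> bool" where
  "is_tgroupoid G \<longleftrightarrow> is_groupoid G \<and> topspace (gtop G) = arr G \<and>
     continuous_map (subtopology (prod_topology (gtop G) (gtop G)) (composable G)) (gtop G)
        (\<lambda>(g, h). cmp G g h) \<and>
     continuous_map (gtop G) (gtop G) (iv G)"

definition local_homeo :: "'a topology \<Rightarrow> 'b topology \<Rightarrow> ('a \<Rightarrow> 'b) \<Rightarrow> bool" where
  "local_homeo X Y f \<longleftrightarrow> continuous_map X Y f \<and>
     (\<forall>x\<in>topspace X. \<exists>U. openin X U \<and> x \<in> U \<and> openin Y (f ` U) \<and>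
        homeomorphic_map (subtopology X U) (subtopology Y (f ` U)) f)"

definition etale :: "('a, 'b) tgpd_scheme \<Rightarrow> bool" where
  "etale G \<longleftrightarrow> is_tgroupoid G \<and> local_homeo (gtop G) (gtop G) (cod G)"

definition has_compact_open_basis :: "'a topology \<Rightarrow> bool" where
  "has_compact_open_basis X \<longleftrightarrow>
     (\<forall>U x. openin X U \<and> x \<in> U \<longrightarrow> (\<exists>K. openin X K \<and> compactin X K \<and> x \<in> K \<and> K \<subseteq> U))"

definition ample :: "('a, 'b) tgpd_scheme \<Rightarrow> bool" where
  "ample G \<longleftrightarrow> etale G \<and> Hausdorff_space (subtopology (gtop G) (units G)) \<and>
     has_compact_open_basis (subtopology (gtop G) (units G))"

definition isotropy :: "('a, 'b) tgpd_scheme \<Rightarrow> 'a set" where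
  "isotropy G = {g \<in> arr G. dom G g = cod G g}"

definition effective :: "('a, 'b) tgpd_scheme \<Rightarrow> bool" where
  "effective G \<longleftrightarrow> (gtop G) interior_of (isotropy G) = units G"

definition lc_cantor :: "'a topology \<Rightarrow> bool" where
  "lc_cantor X \<longleftrightarrow> topspace X \<noteq> {} \<and> second_countable X \<and> Hausdorff_space X \<and>
     has_compact_open_basis X \<and> (\<nexists>x. openin X {x})"

definition gpd_hom :: "('a, 'c) tgpd_scheme \<Rightarrow> ('b, 'd) tgpd_scheme \<Rightarrow> ('a \<Rightarrow> 'b) \<Rightarrow> bool" where
  "gpd_hom G H f \<longleftrightarrow> f ` arr G \<subseteq> arr H \<and>
     (\<forall>(g, h)\<in>composable G. dom H (f g) = cod H (f h) \<and> f (cmp G g h) = cmp H (f g) (f h))"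

definition embeds :: "('a, 'c) tgpd_scheme \<Rightarrow> ('b, 'd) tgpd_scheme \<Rightarrow> bool" where
  "embeds G H \<longleftrightarrow> (\<exists>f. gpd_hom G H f \<and> inj_on f (arr G) \<and> local_homeo (gtop G) (gtop H) f)"

section \<open>The product with the full equivalence relation on N\<close>

definition prodR :: "('a, 'c) tgpd_scheme \<Rightarrow> ('a \<times> (nat \<times> nat)) tgpd" where
  "prodR G = \<lparr> arr = arr G \<times> UNIV,
     dom = (\<lambda>(g, (k, m)). (dom G g, (m, m))),
     cod = (\<lambda>(g, (k, m)). (cod G g, (k, k))),
     cmp = (\<lambda>(g, (k, m)) (h, (m', n)). (cmp G g h, (k, n))),
     iv = (\<lambda>(g, (k, m)). (iv G g, (m, k))),
     gtop = prod_topology (gtop G) (discrete_topology UNIV) \<rparr>"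

text \<open>Infinite words in {a,b}, encoded as nat \<Rightarrow> bool (False = a, True = b),
  with the cylinder (product of discrete) topology.\<close>

type_synonym word = "nat \<Rightarrow> bool"

definition cantor_top :: "word topology" where
  "cantor_top = product_topology (\<lambda>_. discrete_topology UNIV) UNIV"

definition shift :: "nat \<Rightarrow> word \<Rightarrow> word" where
  "shift m x = (\<lambda>n. x (n + m))"

definition GE2_basic :: "(word \<times> int \<times> word) set set" where
  "GE2_basic = {{(x, int m - int n, y) | x y. x \<in> U \<and> y \<in> V \<and> shift m x = shift n y}
      | U V m n. openin cantor_top U \<and> openin cantor_top V \<and>
          inj_on (shift m) U \<and> inj_on (shift n) V \<and> shift m ` U = shift n ` V}"

definition GE2 :: "(word \<times> int \<times> word) tgpd" where
  "GE2 = \<lparr> arr = {(x, int m - int n, y) | x y m n. shift m x = shift n y},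
     dom = (\<lambda>(x, k, y). (y, 0, y)),
     cod = (\<lambda>(x, k, y). (x, 0, x)),
     cmp = (\<lambda>(x, k, y) (y', l, z). (x, k + l, z)),
     iv = (\<lambda>(x, k, y). (y, - k, x)),
     gtop = topology_generated_by GE2_basic \<rparr>"

end

theory Submission
  imports Defs
begin

lemma homeo_restrict:
  assumes "openin X U" "openin Y (f ` U)"
    and h: "homeomorphic_map (subtopology X U) (subtopology Y (f ` U)) f"
    and "W \<subseteq> U" "openin X W"
  shows "openin Y (f ` W) \<and> homeomorphic_map (subtopology X W) (subtopology Y (f ` W)) f"
proof
  have tU: "topspace (subtopology X U) = U" using assms(1) by (simp add: openin_subset Int_absorb1)
  have tV: "topspace (subtopology Y (f ` U)) = f ` U"
    using homeomorphic_imp_surjective_map[OF h] tU by simp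
  have "openin (subtopology X U) W"
    using assms(4,5) openin_open_subtopology[OF assms(1)] by simp
  then have "openin (subtopology Y (f ` U)) (f ` W)"
  proof -
    have "W \<subseteq> topspace (subtopology X U)" using tU assms(4) by simp
    then show ?thesis using homeomorphic_map_openness[OF h] \<open>openin (subtopology X U) W\<close> by blast
  qed
  then show "openin Y (f ` W)" using assms(2) by (rule openin_trans_full)
  have e1: "U \<inter> W = W" using assms(4) by blast
  have e2: "f ` U \<inter> f ` W = f ` W" using assms(4) by blast
  have "homeomorphic_map (subtopology (subtopology X U) W) (subtopology (subtopology Y (f ` U)) (f ` W)) f"
    apply (rule homeomorphic_map_subtopologies[OF h])
    by (simp only: tU tV e1 e2)
  then show "homeomorphic_map (subtopology X W) (subtopology Y (f ` W)) f"
    by (simp only: subtopology_subtopology e1 e2)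
qed

lemma local_homeo_intro:
  assumes "f ` topspace X \<subseteq> topspace Y"
    and loc: "\<And>x. x \<in> topspace X \<Longrightarrow> \<exists>U. openin X U \<and> x \<in> U \<and> openin Y (f ` U) \<and>
        homeomorphic_map (subtopology X U) (subtopology Y (f ` U)) f"
  shows "local_homeo X Y f"
  unfolding local_homeo_def
proof (intro conjI ballI)
  show "continuous_map X Y f"
    unfolding continuous_map_def
  proof (intro conjI allI impI)
    show "f \<in> topspace X \<rightarrow> topspace Y" using assms(1) by (simp only: image_subset_iff_funcset)
    fix V assume V: "openin Y V"
    show "openin X {x \<in> topspace X. f x \<in> V}"
    proof (rule openin_subopen[THEN iffD2], rule ballI)
      fix x assume x: "x \<in> {x \<in> topspace X. f x \<in> V}"
      then obtain U where U: "openin X U" "x \<in> U" "openin Y (f ` U)"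
        "homeomorphic_map (subtopology X U) (subtopology Y (f ` U)) f" using loc by blast
      have c: "continuous_map (subtopology X U) Y f"
        using homeomorphic_imp_continuous_map[OF U(4)] continuous_map_in_subtopology by blast
      have tU: "topspace (subtopology X U) = U" using U(1) by (simp add: openin_subset Int_absorb1)
      have "openin (subtopology X U) {z \<in> U. f z \<in> V}"
        using c V unfolding continuous_map_def tU by blast
      then have "openin X {z \<in> U. f z \<in> V}" using U(1) by (rule openin_trans_full)
      moreover have "{z \<in> U. f z \<in> V} \<subseteq> {x \<in> topspace X. f x \<in> V}"
        using U(1) openin_subset by blast
      ultimately show "\<exists>T. openin X T \<and> x \<in> T \<and> T \<subseteq> {x \<in> topspace X. f x \<in> V}"
        using x U(2) by blast
    qed
  qed
qed (use loc in blast)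

lemma local_homeo_compose:
  assumes f: "local_homeo X Y f" and g: "local_homeo Y Z g"
  shows "local_homeo X Z (g \<circ> f)"
proof (rule local_homeo_intro)
  have cf: "continuous_map X Y f" using f unfolding local_homeo_def by (rule conjunct1)
  have cg: "continuous_map Y Z g" using g unfolding local_homeo_def by (rule conjunct1)
  have "f ` topspace X \<subseteq> topspace Y" "g ` topspace Y \<subseteq> topspace Z"
    using cf cg by (simp_all add: continuous_map_image_subset_topspace)
  then show "(g \<circ> f) ` topspace X \<subseteq> topspace Z" by (simp add: image_comp[symmetric] image_subset_iff)
  fix x assume x: "x \<in> topspace X"
  obtain U where U: "openin X U" "x \<in> U" "openin Y (f ` U)"
     "homeomorphic_map (subtopology X U) (subtopology Y (f ` U)) f" using f x unfolding local_homeo_def by blast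
  have fx: "f x \<in> topspace Y" using cf x by (simp add: continuous_map_def Pi_iff)
  obtain V where V: "openin Y V" "f x \<in> V" "openin Z (g ` V)"
     "homeomorphic_map (subtopology Y V) (subtopology Z (g ` V)) g" using g fx unfolding local_homeo_def by blast
  define W where "W = U \<inter> {z \<in> topspace X. f z \<in> V}"
  from cf have Wo: "openin X W" unfolding W_def using U(1) V(1) by (simp add: continuous_map openin_Int) 
  have 1: "openin Y (f ` W) \<and> homeomorphic_map (subtopology X W) (subtopology Y (f ` W)) f"
    by (rule homeo_restrict[OF U(1,3,4)]) (use Wo W_def in auto)
  have 2: "openin Z (g ` (f ` W)) \<and> homeomorphic_map (subtopology Y (f ` W)) (subtopology Z (g ` (f ` W))) g"
    by (rule homeo_restrict[OF V(1,3,4)]) (use 1 W_def in auto)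
  show "\<exists>U. openin X U \<and> x \<in> U \<and> openin Z ((g \<circ> f) ` U) \<and>
        homeomorphic_map (subtopology X U) (subtopology Z ((g \<circ> f) ` U)) (g \<circ> f)"
  proof (intro exI conjI)
    show "openin X W" by (rule Wo)
    show "x \<in> W" using x U(2) V(2) W_def by auto
    show "openin Z ((g \<circ> f) ` W)" using 2 by (simp add: image_comp)
    show "homeomorphic_map (subtopology X W) (subtopology Z ((g \<circ> f) ` W)) (g \<circ> f)"
      using homeomorphic_map_compose[of "subtopology X W" "subtopology Y (f ` W)" f "subtopology Z (g ` (f ` W))" g] 1 2
      by (simp add: image_comp)
  qed
qed

lemma homeo_sing:
  assumes "b \<in> topspace Y"
  shows "homeomorphic_maps (subtopology X U) (subtopology (prod_topology X Y) (U \<times> {b})) (\<lambda>x. (x, b)) fst"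
  unfolding homeomorphic_maps_def
proof (intro conjI)
  show "continuous_map (subtopology X U) (subtopology (prod_topology X Y) (U \<times> {b})) (\<lambda>x. (x, b))"
    unfolding continuous_map_in_subtopology
    using assms by (auto simp: continuous_map_pairedI continuous_map_from_subtopology)
  show "continuous_map (subtopology (prod_topology X Y) (U \<times> {b})) (subtopology X U) fst"
    unfolding continuous_map_in_subtopology
    by (auto intro: continuous_map_from_subtopology continuous_map_fst)
qed auto

definition agree :: "word \<Rightarrow> word \<Rightarrow> nat \<Rightarrow> bool" where
  "agree x z N \<longleftrightarrow> (\<forall>i<N. x i = z i)"

lemma cantor_open:
  "openin cantor_top U \<longleftrightarrow> (\<forall>x\<in>U. \<exists>N. \<forall>z. agree x z N \<longrightarrow> z \<in> U)"
proof
  assume o: "openin cantor_top U"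
  show "\<forall>x\<in>U. \<exists>N. \<forall>z. agree x z N \<longrightarrow> z \<in> U"
  proof
    fix x assume "x \<in> U"
    then obtain V where fin: "finite {i \<in> (UNIV::nat set). V i \<noteq> topspace (discrete_topology (UNIV::bool set))}"
       and xV: "x \<in> PiE UNIV V" and sub: "PiE UNIV V \<subseteq> U"
      using o unfolding cantor_top_def openin_product_topology_alt by blast
    then have fin': "finite {i. V i \<noteq> UNIV}" by simp
    obtain N where N: "{i. V i \<noteq> UNIV} \<subseteq> {..<N}" using finite_nat_bounded[OF fin'] by blast
    show "\<exists>N. \<forall>z. agree x z N \<longrightarrow> z \<in> U"
    proof (intro exI allI impI)
      fix z assume a: "agree x z N"
      have "z i \<in> V i" for i
      proof (cases "i < N")
        case True
        then have "z i = x i" using a unfolding agree_def by simp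
        moreover have "x i \<in> V i" using xV by (simp add: PiE_iff)
        ultimately show ?thesis by simp
      next
        case False then show ?thesis using N by auto
      qed
      then have "z \<in> PiE UNIV V" by (simp add: PiE_iff)
      then show "z \<in> U" using sub by blast
    qed
  qed
next
  assume R: "\<forall>x\<in>U. \<exists>N. \<forall>z. agree x z N \<longrightarrow> z \<in> U"
  show "openin cantor_top U"
    unfolding cantor_top_def openin_product_topology_alt
  proof
    fix x assume "x \<in> U"
    then obtain N where N: "\<forall>z. agree x z N \<longrightarrow> z \<in> U" using R by blast
    define V where "V i = (if i < N then {x i} else UNIV)" for i
    have "{i. V i \<noteq> UNIV} \<subseteq> {..<N}" by (auto simp: V_def)
    then have "finite {i. V i \<noteq> UNIV}" using finite_subset by blast
    then have "finite {i \<in> (UNIV::nat set). V i \<noteq> topspace (discrete_topology (UNIV::bool set))}"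
      by simp
    moreover have "\<forall>i\<in>UNIV. openin (discrete_topology UNIV) (V i)" by simp
    moreover have "x \<in> PiE UNIV V" by (simp add: V_def PiE_iff)
    moreover have "PiE UNIV V \<subseteq> U"
    proof
      fix z assume "z \<in> PiE UNIV V"
      then have "\<forall>i. z i \<in> V i" by (simp add: PiE_iff)
      then have "agree x z N" unfolding agree_def V_def by (metis singletonD)
      then show "z \<in> U" using N by blast
    qed
    ultimately show "\<exists>V. finite {i \<in> UNIV. V i \<noteq> topspace (discrete_topology UNIV)} \<and>
           (\<forall>i\<in>UNIV. openin (discrete_topology UNIV) (V i)) \<and> x \<in> Pi\<^sub>E UNIV V \<and> Pi\<^sub>E UNIV V \<subseteq> U"
      by blast
  qed
qed

definition cyl :: "word \<Rightarrow> nat \<Rightarrow> word set" where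
  "cyl x N = {z. agree x z N}"

lemma cyl_open: "openin cantor_top (cyl x N)"
  unfolding cantor_open cyl_def agree_def by (intro ballI exI[of _ N]) auto

lemma shift_eq_iff: "shift p x = shift q y \<longleftrightarrow> (\<forall>i. x (i + p) = y (i + q))"
  unfolding shift_def fun_eq_iff by simp

lemma shift_inj_cyl: "inj_on (shift p) (cyl x (p + N))"
proof (rule inj_onI)
  fix a b assume a: "a \<in> cyl x (p + N)" and b: "b \<in> cyl x (p + N)" and e: "shift p a = shift p b"
  show "a = b"
  proof
    fix i show "a i = b i"
    proof (cases "i < p")
      case True then show ?thesis using a b by (auto simp: cyl_def agree_def)
    next
      case False then have i: "i = (i - p) + p" by simp
      have "a ((i - p) + p) = b ((i - p) + p)" using e unfolding shift_eq_iff by blast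
      then show ?thesis using i by simp
    qed
  qed
qed

lemma shift_cyl: "shift p ` cyl x (p + N) = cyl (shift p x) N"
proof
  show "shift p ` cyl x (p + N) \<subseteq> cyl (shift p x) N"
    by (auto simp: cyl_def agree_def shift_def)
  show "cyl (shift p x) N \<subseteq> shift p ` cyl x (p + N)"
  proof
    fix w assume w: "w \<in> cyl (shift p x) N"
    define z where "z i = (if i < p then x i else w (i - p))" for i
    have "shift p z = w" by (auto simp: z_def shift_def)
    moreover have "z \<in> cyl x (p + N)"
      unfolding cyl_def agree_def
    proof (intro CollectI allI impI)
      fix i assume i: "i < p + N"
      show "x i = z i"
      proof (cases "i < p")
        case True then show ?thesis by (simp add: z_def)
      next
        case False
        then have "i - p < N" "i - p + p = i" using i by auto
        then show ?thesis using w False by (auto simp: z_def cyl_def agree_def shift_def)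
      qed
    qed
    ultimately show "w \<in> shift p ` cyl x (p + N)" by blast
  qed
qed

definition nice :: "(word \<times> int \<times> word) set \<Rightarrow> bool" where
  "nice S \<longleftrightarrow> (\<forall>(x,k,y)\<in>S. \<exists>p q N. k = int p - int q \<and> shift p x = shift q y \<and>
     (\<forall>x' y'. agree x x' (p+N) \<and> agree y y' (q+N) \<and> shift p x' = shift q y' \<longrightarrow> (x',k,y') \<in> S))"

lemma niceD:
  assumes "nice S" "(x,k,y) \<in> S"
  shows "\<exists>p q N. k = int p - int q \<and> shift p x = shift q y \<and>
     (\<forall>x' y'. agree x x' (p+N) \<and> agree y y' (q+N) \<and> shift p x' = shift q y' \<longrightarrow> (x',k,y') \<in> S)"
  using assms unfolding nice_def Ball_def by (elim allE[of _ "(x,k,y)"]) simp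

lemma basic_nice: assumes "B \<in> GE2_basic" shows "nice B"
proof -
  obtain U V m n where B: "B = {(x, int m - int n, y) | x y. x \<in> U \<and> y \<in> V \<and> shift m x = shift n y}"
    and U: "openin cantor_top U" and V: "openin cantor_top V"
    using assms unfolding GE2_basic_def by blast
  show ?thesis unfolding nice_def
  proof (clarify)
    fix x k y assume "(x, k, y) \<in> B"
    then have x: "x \<in> U" and y: "y \<in> V" and e: "shift m x = shift n y" and k: "k = int m - int n"
      using B by auto
    obtain N1 where N1: "\<forall>z. agree x z N1 \<longrightarrow> z \<in> U" using U x unfolding cantor_open by blast
    obtain N2 where N2: "\<forall>z. agree y z N2 \<longrightarrow> z \<in> V" using V y unfolding cantor_open by blast
    show "\<exists>p q N. k = int p - int q \<and> shift p x = shift q y \<and>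
       (\<forall>x' y'. agree x x' (p + N) \<and> agree y y' (q + N) \<and> shift p x' = shift q y' \<longrightarrow> (x', k, y') \<in> B)"
    proof (intro exI conjI allI impI)
      show "k = int m - int n" by (rule k)
      show "shift m x = shift n y" by (rule e)
      fix x' y' assume a: "agree x x' (m + (N1 + N2)) \<and> agree y y' (n + (N1 + N2)) \<and> shift m x' = shift n y'"
      then have "x' \<in> U" "y' \<in> V" using N1 N2 unfolding agree_def by auto
      then show "(x', k, y') \<in> B" using a B k by auto
    qed
  qed
qed

lemma nice_Int: assumes "nice A" "nice B" shows "nice (A \<inter> B)"
  unfolding nice_def
proof clarify
  fix x k y assume xa: "(x,k,y) \<in> A" and xb: "(x,k,y) \<in> B"
  obtain p1 q1 N1 where 1: "k = int p1 - int q1" "shift p1 x = shift q1 y"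
     "\<forall>x' y'. agree x x' (p1+N1) \<and> agree y y' (q1+N1) \<and> shift p1 x' = shift q1 y' \<longrightarrow> (x',k,y') \<in> A"
    using niceD[OF assms(1) xa] by blast
  obtain p2 q2 N2 where 2: "k = int p2 - int q2" "shift p2 x = shift q2 y"
     "\<forall>x' y'. agree x x' (p2+N2) \<and> agree y y' (q2+N2) \<and> shift p2 x' = shift q2 y' \<longrightarrow> (x',k,y') \<in> B"
    using niceD[OF assms(2) xb] by blast
  have up: "shift (p + j) x' = shift (q + j) y'" if "shift p x' = shift q y'" for p q j x' y'
    using that unfolding shift_eq_iff by (metis add.assoc add.commute)
  have mono: "agree a b M" if "agree a b N" "M \<le> N" for a b M N
    using that unfolding agree_def by auto
  show "\<exists>p q N. k = int p - int q \<and> shift p x = shift q y \<and>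
      (\<forall>x' y'. agree x x' (p + N) \<and> agree y y' (q + N) \<and> shift p x' = shift q y' \<longrightarrow> (x', k, y') \<in> A \<inter> B)"
  proof (cases "p1 \<le> p2")
    case True
    define j where "j = p2 - p1"
    have p2: "p2 = p1 + j" and q2: "q2 = q1 + j" using True 1(1) 2(1) by (auto simp: j_def)
    show ?thesis
    proof (intro exI conjI allI impI)
      show "k = int p1 - int q1" "shift p1 x = shift q1 y" using 1 by auto
      fix x' y' assume a: "agree x x' (p1 + (N1 + N2 + j)) \<and> agree y y' (q1 + (N1 + N2 + j)) \<and> shift p1 x' = shift q1 y'"
      have "(x',k,y') \<in> A" using 1(3) a mono[of _ _ "p1 + (N1 + N2 + j)" "p1 + N1"] mono[of _ _ "q1 + (N1 + N2 + j)" "q1 + N1"] by auto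
      moreover have "(x',k,y') \<in> B" using 2(3) a up[of p1 x' q1 y' j] mono[of _ _ "p1 + (N1 + N2 + j)" "p2 + N2"] mono[of _ _ "q1 + (N1 + N2 + j)" "q2 + N2"] p2 q2 by auto
      ultimately show "(x',k,y') \<in> A \<inter> B" by blast
    qed
  next
    case False
    define j where "j = p1 - p2"
    have p1: "p1 = p2 + j" and q1: "q1 = q2 + j" using False 1(1) 2(1) by (auto simp: j_def)
    show ?thesis
    proof (intro exI conjI allI impI)
      show "k = int p2 - int q2" "shift p2 x = shift q2 y" using 2 by auto
      fix x' y' assume a: "agree x x' (p2 + (N1 + N2 + j)) \<and> agree y y' (q2 + (N1 + N2 + j)) \<and> shift p2 x' = shift q2 y'"
      have "(x',k,y') \<in> B" using 2(3) a mono[of _ _ "p2 + (N1 + N2 + j)" "p2 + N2"] mono[of _ _ "q2 + (N1 + N2 + j)" "q2 + N2"] by auto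
      moreover have "(x',k,y') \<in> A" using 1(3) a up[of p2 x' q2 y' j] mono[of _ _ "p2 + (N1 + N2 + j)" "p1 + N1"] mono[of _ _ "q2 + (N1 + N2 + j)" "q1 + N1"] p1 q1 by auto
      ultimately show "(x',k,y') \<in> A \<inter> B" by blast
    qed
  qed
qed

lemma nice_Union: assumes "\<And>A. A \<in> K \<Longrightarrow> nice A" shows "nice (\<Union>K)"
  unfolding nice_def
proof clarify
  fix x k y A assume xA: "(x,k,y) \<in> A" and AK: "A \<in> K"
  obtain p q N where "k = int p - int q" "shift p x = shift q y"
     "\<forall>x' y'. agree x x' (p+N) \<and> agree y y' (q+N) \<and> shift p x' = shift q y' \<longrightarrow> (x',k,y') \<in> A"
    using niceD[OF assms[OF AK] xA] by blast
  then show "\<exists>p q N. k = int p - int q \<and> shift p x = shift q y \<and>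
      (\<forall>x' y'. agree x x' (p + N) \<and> agree y y' (q + N) \<and> shift p x' = shift q y' \<longrightarrow> (x', k, y') \<in> \<Union>K)"
    using \<open>A \<in> K\<close> by blast
qed

lemma gen_nice: "generate_topology_on GE2_basic S \<Longrightarrow> nice S"
proof (induction rule: generate_topology_on.induct)
  case Empty then show ?case by (simp add: nice_def)
next
  case (Int a b) then show ?case using nice_Int by blast
next
  case (UN K) then show ?case by (intro nice_Union) auto
next
  case (Basis s) then show ?case by (rule basic_nice)
qed

lemma nice_open: assumes "nice S" shows "openin (topology_generated_by GE2_basic) S"
proof (rule openin_subopen[THEN iffD2], rule ballI)
  fix z assume "z \<in> S"
  then obtain x k y where zz: "z = (x,k,y)" and xs: "(x,k,y) \<in> S" by (cases z) auto
  then obtain p q N where k: "k = int p - int q" and e: "shift p x = shift q y" and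
     P: "\<forall>x' y'. agree x x' (p+N) \<and> agree y y' (q+N) \<and> shift p x' = shift q y' \<longrightarrow> (x',k,y') \<in> S"
    using niceD[OF assms xs] by blast
  define B where "B = {(x', int p - int q, y') | x' y'. x' \<in> cyl x (p+N) \<and> y' \<in> cyl y (q+N) \<and> shift p x' = shift q y'}"
  have "B \<in> GE2_basic"
    unfolding GE2_basic_def B_def
    apply (rule CollectI, rule exI[of _ "cyl x (p+N)"], rule exI[of _ "cyl y (q+N)"], rule exI[of _ p], rule exI[of _ q])
    apply (intro conjI refl cyl_open shift_inj_cyl)
    using e by (simp only: shift_cyl)
  moreover have "(x,k,y) \<in> B"
  proof -
    have "x \<in> cyl x (p+N)" "y \<in> cyl y (q+N)" by (simp_all add: cyl_def agree_def)
    then show ?thesis unfolding B_def using k e by blast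
  qed
  moreover have "B \<subseteq> S"
  proof
    fix z assume "z \<in> B"
    then obtain x' y' where z: "z = (x', int p - int q, y')" and "x' \<in> cyl x (p+N)" "y' \<in> cyl y (q+N)" "shift p x' = shift q y'"
      unfolding B_def by blast
    then show "z \<in> S" using P k unfolding cyl_def by simp
  qed
  ultimately show "\<exists>T. openin (topology_generated_by GE2_basic) T \<and> z \<in> T \<and> T \<subseteq> S"
    using topology_generated_by_Basis zz by blast
qed

lemma openT: "openin (gtop GE2) S \<longleftrightarrow> nice S"
proof
  assume "openin (gtop GE2) S"
  then have "generate_topology_on GE2_basic S" by (simp add: GE2_def openin_topology_generated_by_iff)
  then show "nice S" by (rule gen_nice)
next
  assume "nice S"
  then show "openin (gtop GE2) S" using nice_open by (simp add: GE2_def)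
qed

lemma nice_arr: "nice (arr GE2)"
  unfolding nice_def
proof clarify
  fix x k y assume "(x,k,y) \<in> arr GE2"
  then obtain m n where k: "k = int m - int n" and e: "shift m x = shift n y" unfolding GE2_def by auto
  show "\<exists>p q N. k = int p - int q \<and> shift p x = shift q y \<and>
     (\<forall>x' y'. agree x x' (p+N) \<and> agree y y' (q+N) \<and> shift p x' = shift q y' \<longrightarrow> (x',k,y') \<in> arr GE2)"
    apply (rule exI[of _ m], rule exI[of _ n], rule exI[of _ 0])
    using k e unfolding GE2_def by auto
qed

lemma nice_sub: assumes "nice S" shows "S \<subseteq> arr GE2"
proof clarify
  fix x k y assume "(x,k,y) \<in> S"
  then obtain p q where "k = int p - int q" "shift p x = shift q y" using niceD[OF assms] by blast
  then show "(x,k,y) \<in> arr GE2" unfolding GE2_def by auto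
qed

lemma topspaceT: "topspace (gtop GE2) = arr GE2"
proof
  have "openin (gtop GE2) (arr GE2)" using nice_arr openT by blast
  then show "arr GE2 \<subseteq> topspace (gtop GE2)" by (rule openin_subset)
  have "nice (topspace (gtop GE2))" using openT openin_topspace by blast
  then show "topspace (gtop GE2) \<subseteq> arr GE2" by (rule nice_sub)
qed

definition pre :: "nat \<Rightarrow> word \<Rightarrow> word" where
  "pre m x = (\<lambda>i. if i < m then False else if i = m then True else x (i - Suc m))"

definition phi :: "nat \<Rightarrow> nat \<Rightarrow> word \<times> int \<times> word \<Rightarrow> word \<times> int \<times> word" where
  "phi m n z = (case z of (x, k, y) \<Rightarrow> (pre m x, k + int m - int n, pre n y))"

lemma phi_simp: "phi m n (x, k, y) = (pre m x, k + int m - int n, pre n y)"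
  by (simp add: phi_def)

lemma pre_ge: "Suc m \<le> j \<Longrightarrow> pre m x j = x (j - Suc m)"
  by (simp add: pre_def)

lemma pre_shift: "shift (p + Suc m) (pre m x) = shift p x"
  unfolding shift_def fun_eq_iff by (simp add: pre_def)

lemma shift_shift: "shift p (shift q x) = shift (p + q) x"
  unfolding shift_def fun_eq_iff by (simp add: add.assoc)

lemma pre_inj: assumes "pre m x = pre m' x'" shows "m = m' \<and> x = x'"
proof -
  have "m = m'"
  proof (rule ccontr)
    assume "m \<noteq> m'"
    then consider "m < m'" | "m' < m" by linarith
    then show False
    proof cases
      case 1
      then have "pre m x m = True" "pre m' x' m = False" by (simp_all add: pre_def)
      then show False using assms by simp
    next
      case 2
      then have "pre m' x' m' = True" "pre m x m' = False" by (simp_all add: pre_def)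
      then show False using assms by simp
    qed
  qed
  moreover have "x = x'"
  proof
    fix i
    have "pre m x (i + Suc m) = pre m' x' (i + Suc m)" using assms by simp
    then show "x i = x' i" using \<open>m = m'\<close> by (simp add: pre_def)
  qed
  ultimately show ?thesis by simp
qed

lemma inj_phi: "inj (phi m n)"
proof (rule injI)
  fix a b assume e: "phi m n a = phi m n b"
  obtain x k y where a: "a = (x,k,y)" by (cases a) auto
  obtain x' k' y' where b: "b = (x',k',y')" by (cases b) auto
  have "pre m x = pre m x'" "pre n y = pre n y'" "k + int m - int n = k' + int m - int n"
    using e by (simp_all add: a b phi_simp)
  then show "a = b" using pre_inj a b by auto
qed

lemma agree_mono: "agree a b N \<Longrightarrow> M \<le> N \<Longrightarrow> agree a b M"
  unfolding agree_def by auto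

lemma pre_shift_back: assumes "agree (pre m x) z (Suc m)" shows "z = pre m (shift (Suc m) z)"
proof
  fix i show "z i = pre m (shift (Suc m) z) i"
  proof (cases "i < Suc m")
    case True
    then have "z i = pre m x i" using assms unfolding agree_def by simp
    then show ?thesis using True by (simp add: pre_def)
  next
    case False
    then show ?thesis by (simp add: pre_def shift_def)
  qed
qed

lemma agree_shift_pre: assumes "agree (pre m x) z (L + Suc m)" shows "agree x (shift (Suc m) z) L"
  unfolding agree_def
proof (intro allI impI)
  fix i assume i: "i < L"
  have "pre m x (i + Suc m) = z (i + Suc m)" using assms i unfolding agree_def by simp
  then show "x i = shift (Suc m) z i" by (simp add: pre_def shift_def)
qed

lemma agree_pre: assumes "agree x x' L" shows "agree (pre m x) (pre m x') (L + Suc m)"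
  using assms unfolding agree_def pre_def by auto

lemma niceI:
  assumes "\<And>x k y. (x,k,y) \<in> S \<Longrightarrow> \<exists>p q N. k = int p - int q \<and> shift p x = shift q y \<and>
     (\<forall>x' y'. agree x x' (p+N) \<and> agree y y' (q+N) \<and> shift p x' = shift q y' \<longrightarrow> (x',k,y') \<in> S)"
  shows "nice S"
  unfolding nice_def
proof (intro ballI)
  fix z assume "z \<in> S"
  moreover obtain x k y where "z = (x,k,y)" by (cases z) auto
  ultimately show "case z of (x, k, y) \<Rightarrow> \<exists>p q N. k = int p - int q \<and> shift p x = shift q y \<and>
     (\<forall>x' y'. agree x x' (p+N) \<and> agree y y' (q+N) \<and> shift p x' = shift q y' \<longrightarrow> (x',k,y') \<in> S)"
    using assms[of x k y] by simp
qed

lemma nice_image: assumes "nice S" shows "nice (phi m n ` S)"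
proof (rule niceI)
  fix x'' k'' y'' assume "(x'', k'', y'') \<in> phi m n ` S"
  then obtain z where zS: "z \<in> S" and zz: "(x'', k'', y'') = phi m n z" by blast
  obtain x k y where z: "z = (x,k,y)" by (cases z) auto
  have xs: "(x,k,y) \<in> S" using zS z by simp
  have e1: "x'' = pre m x" "k'' = k + int m - int n" "y'' = pre n y" using zz z by (simp_all add: phi_simp)
  obtain p q N where k: "k = int p - int q" and e: "shift p x = shift q y" and
     P: "\<forall>x' y'. agree x x' (p+N) \<and> agree y y' (q+N) \<and> shift p x' = shift q y' \<longrightarrow> (x',k,y') \<in> S"
    using niceD[OF assms xs] by blast
  show "\<exists>p q N. k'' = int p - int q \<and> shift p x'' = shift q y'' \<and>
     (\<forall>x' y'. agree x'' x' (p+N) \<and> agree y'' y' (q+N) \<and> shift p x' = shift q y' \<longrightarrow> (x',k'',y') \<in> phi m n ` S)"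
  proof (intro exI conjI allI impI)
    show "k'' = int (p + Suc m) - int (q + Suc n)" using e1 k by simp
    show "shift (p + Suc m) x'' = shift (q + Suc n) y''" using e1 e by (simp only: pre_shift)
    fix x1 y1 assume a: "agree x'' x1 (p + Suc m + N) \<and> agree y'' y1 (q + Suc n + N) \<and> shift (p + Suc m) x1 = shift (q + Suc n) y1"
    define x' where "x' = shift (Suc m) x1"
    define y' where "y' = shift (Suc n) y1"
    have ax: "agree (pre m x) x1 ((p + N) + Suc m)" using a e1 by (simp add: ac_simps)
    have ay: "agree (pre n y) y1 ((q + N) + Suc n)" using a e1 by (simp add: ac_simps)
    have x1: "x1 = pre m x'" unfolding x'_def
      by (rule pre_shift_back, rule agree_mono[OF ax]) simp
    have y1: "y1 = pre n y'" unfolding y'_def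
      by (rule pre_shift_back, rule agree_mono[OF ay]) simp
    have "agree x x' (p + N)" unfolding x'_def by (rule agree_shift_pre[OF ax])
    moreover have "agree y y' (q + N)" unfolding y'_def by (rule agree_shift_pre[OF ay])
    moreover have "shift p x' = shift q y'"
      unfolding x'_def y'_def shift_shift using a by (simp add: ac_simps)
    ultimately have "(x', k, y') \<in> S" using P by blast
    moreover have "phi m n (x', k, y') = (x1, k'', y1)" using x1 y1 e1 by (simp add: phi_simp)
    ultimately show "(x1, k'', y1) \<in> phi m n ` S" by (metis imageI)
  qed
qed

lemma nice_preimage: assumes "nice S" shows "nice {z. phi m n z \<in> S}"
proof (rule niceI)
  fix x k y assume "(x, k, y) \<in> {z. phi m n z \<in> S}"
  then have xs: "(pre m x, k + int m - int n, pre n y) \<in> S" by (simp add: phi_simp)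
  obtain p q N where k: "k + int m - int n = int p - int q" and e: "shift p (pre m x) = shift q (pre n y)" and
     P: "\<forall>x' y'. agree (pre m x) x' (p+N) \<and> agree (pre n y) y' (q+N) \<and> shift p x' = shift q y' \<longrightarrow>
          (x', k + int m - int n, y') \<in> S"
    using niceD[OF assms xs] by blast
  have e': "\<forall>i. pre m x (i + p) = pre n y (i + q)" using e unfolding shift_eq_iff .
  show "\<exists>p q N. k = int p - int q \<and> shift p x = shift q y \<and>
     (\<forall>x' y'. agree x x' (p+N) \<and> agree y y' (q+N) \<and> shift p x' = shift q y' \<longrightarrow> (x',k,y') \<in> {z. phi m n z \<in> S})"
  proof (intro exI conjI allI impI)
    show "k = int (p + n) - int (q + m)" using k by simp
    show "shift (p + n) x = shift (q + m) y"
      unfolding shift_eq_iff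
    proof
      fix j
      have "pre m x ((j + m + n + 1) + p) = pre n y ((j + m + n + 1) + q)" using e' by blast
      then show "x (j + (p + n)) = y (j + (q + m))" by (simp add: pre_ge ac_simps)
    qed
    fix x' y' assume a: "agree x x' (p + n + N) \<and> agree y y' (q + m + N) \<and> shift (p + n) x' = shift (q + m) y'"
    have ax: "agree (pre m x) (pre m x') (p + n + N + Suc m)" using a agree_pre by blast
    have ay: "agree (pre n y) (pre n y') (q + m + N + Suc n)" using a agree_pre by blast
    have s: "\<forall>j. x' (j + (p + n)) = y' (j + (q + m))" using a unfolding shift_eq_iff by blast
    have "shift p (pre m x') = shift q (pre n y')"
      unfolding shift_eq_iff
    proof
      fix i
      show "pre m x' (i + p) = pre n y' (i + q)"
      proof (cases "i < m + n + 1")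
        case True
        have "pre m x' (i + p) = pre m x (i + p)" using ax True unfolding agree_def by simp
        moreover have "pre n y' (i + q) = pre n y (i + q)" using ay True unfolding agree_def by simp
        ultimately show ?thesis using e' by simp
      next
        case False
        define j where "j = i - (m + n + 1)"
        have j: "i = j + m + n + 1" using False unfolding j_def by simp
        have "x' (j + (p + n)) = y' (j + (q + m))" using s by blast
        then show ?thesis using j by (simp add: pre_ge ac_simps)
      qed
    qed
    then have "(pre m x', k + int m - int n, pre n y') \<in> S"
      using P agree_mono[OF ax, of "p + N"] agree_mono[OF ay, of "q + N"] by simp
    then show "(x', k, y') \<in> {z. phi m n z \<in> S}" by (simp add: phi_simp)
  qed
qed

lemma arr_GE2: "arr GE2 = {(x, int m - int n, y) |x y m n. shift m x = shift n y}"
  by (simp add: GE2_def)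

lemma phi_arr: assumes "z \<in> arr GE2" shows "phi m n z \<in> arr GE2"
proof -
  obtain x y a b where z: "z = (x, int a - int b, y)" and e: "shift a x = shift b y"
    using assms unfolding GE2_def by auto
  have "phi m n z = (pre m x, int (a + Suc m) - int (b + Suc n), pre n y)" by (simp add: z phi_simp)
  moreover have "shift (a + Suc m) (pre m x) = shift (b + Suc n) (pre n y)" using e by (simp only: pre_shift)
  ultimately show ?thesis unfolding arr_GE2 by blast
qed

lemma cont_phi: "continuous_map (gtop GE2) (gtop GE2) (phi m n)"
  unfolding continuous_map_def
proof (intro conjI allI impI)
  show "phi m n \<in> topspace (gtop GE2) \<rightarrow> topspace (gtop GE2)"
    unfolding topspaceT using phi_arr by blast
  fix U assume "openin (gtop GE2) U"
  then have "nice U" using openT by blast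
  then have "nice (arr GE2 \<inter> {z. phi m n z \<in> U})" using nice_Int nice_arr nice_preimage by blast
  moreover have "{x \<in> topspace (gtop GE2). phi m n x \<in> U} = arr GE2 \<inter> {z. phi m n z \<in> U}"
    unfolding topspaceT by blast
  ultimately show "openin (gtop GE2) {x \<in> topspace (gtop GE2). phi m n x \<in> U}" using openT by simp
qed

lemma open_phi: "openin (gtop GE2) A \<Longrightarrow> openin (gtop GE2) (phi m n ` A)"
  using openT nice_image by blast

lemma homeo_phi:
  assumes A: "openin (gtop GE2) A"
  shows "homeomorphic_map (subtopology (gtop GE2) A) (subtopology (gtop GE2) (phi m n ` A)) (phi m n)"
proof (rule bijective_open_imp_homeomorphic_map)
  have tA: "topspace (subtopology (gtop GE2) A) = A" using A by (simp add: openin_subset Int_absorb1)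
  have tB: "topspace (subtopology (gtop GE2) (phi m n ` A)) = phi m n ` A"
    using open_phi[OF A] by (simp add: openin_subset Int_absorb1)
  show "continuous_map (subtopology (gtop GE2) A) (subtopology (gtop GE2) (phi m n ` A)) (phi m n)"
    unfolding continuous_map_in_subtopology tA
    using continuous_map_from_subtopology[OF cont_phi] by blast
  show "open_map (subtopology (gtop GE2) A) (subtopology (gtop GE2) (phi m n ` A)) (phi m n)"
    unfolding open_map_def
  proof (intro allI impI)
    fix V assume "openin (subtopology (gtop GE2) A) V"
    then have V: "openin (gtop GE2) V" "V \<subseteq> A" using openin_open_subtopology[OF A] by blast+
    then have "openin (gtop GE2) (phi m n ` V)" "phi m n ` V \<subseteq> phi m n ` A" using open_phi by blast+
    then show "openin (subtopology (gtop GE2) (phi m n ` A)) (phi m n ` V)"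
      using openin_open_subtopology[OF open_phi[OF A]] by blast
  qed
  show "phi m n ` topspace (subtopology (gtop GE2) A) = topspace (subtopology (gtop GE2) (phi m n ` A))"
    using tA tB by simp
  show "inj_on (phi m n) (topspace (subtopology (gtop GE2) A))"
    using inj_phi by (rule inj_on_subset) simp
qed

theorem proposition11p14:
  fixes H :: "'a tgpd"
  assumes "ample H" and "effective H"
    and "second_countable (gtop H)" and "Hausdorff_space (gtop H)"
    and "lc_cantor (subtopology (gtop H) (units H))"
  shows "embeds H GE2 \<longleftrightarrow> embeds (prodR H) GE2"
proof
  let ?P = "prod_topology (gtop H) (discrete_topology (UNIV::(nat \<times> nat) set))"
  have gP: "gtop (prodR H) = ?P" by (simp add: prodR_def)
  have aP: "arr (prodR H) = arr H \<times> UNIV" by (simp add: prodR_def)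
  {
  assume "embeds H GE2"
  then obtain f where fh: "gpd_hom H GE2 f" and fi: "inj_on f (arr H)"
    and fl: "local_homeo (gtop H) (gtop GE2) f" unfolding embeds_def by blast
  define F where "F = (\<lambda>(h::'a, (m::nat, n::nat)). phi m n (f h))"
  have Fs: "F (h, (m, n)) = phi m n (f h)" for h m n by (simp add: F_def)
  have farr: "f h \<in> arr GE2" if "h \<in> arr H" for h using fh that unfolding gpd_hom_def by blast
  have hom: "gpd_hom (prodR H) GE2 F"
    unfolding gpd_hom_def
  proof (intro conjI)
    show "F ` arr (prodR H) \<subseteq> arr GE2"
    proof
      fix z assume "z \<in> F ` arr (prodR H)"
      then obtain a where a: "a \<in> arr H \<times> UNIV" "z = F a" unfolding aP by blast
      then obtain h m n where "h \<in> arr H" "z = F (h,(m,n))" by (cases a) auto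
      then show "z \<in> arr GE2" using farr phi_arr Fs by simp
    qed
    show "\<forall>(a, b)\<in>composable (prodR H). dom GE2 (F a) = cod GE2 (F b) \<and> F (cmp (prodR H) a b) = cmp GE2 (F a) (F b)"
    proof clarify
      fix g k m h m' n assume c: "((g,(k,m)),(h,(m',n))) \<in> composable (prodR H)"
      then have g: "g \<in> arr H" and h: "h \<in> arr H" and mm: "m' = m" and dc: "dom H g = cod H h"
        by (simp_all add: composable_def prodR_def)
      then have "(g,h) \<in> composable H" by (simp add: composable_def)
      then have hd: "dom GE2 (f g) = cod GE2 (f h)" and hc: "f (cmp H g h) = cmp GE2 (f g) (f h)"
        using fh unfolding gpd_hom_def by auto
      obtain x1 k1 y1 where f1: "f g = (x1,k1,y1)" by (cases "f g") auto
      obtain x2 k2 y2 where f2: "f h = (x2,k2,y2)" by (cases "f h") auto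
      have y1: "y1 = x2" using hd f1 f2 by (simp add: GE2_def)
      show "dom GE2 (F (g,(k,m))) = cod GE2 (F (h,(m',n))) \<and>
            F (cmp (prodR H) (g,(k,m)) (h,(m',n))) = cmp GE2 (F (g,(k,m))) (F (h,(m',n)))"
        using hc f1 f2 y1 mm by (simp add: Fs phi_simp prodR_def GE2_def)
    qed
  qed
  have inj: "inj_on F (arr (prodR H))"
  proof (rule inj_onI)
    fix a b assume a: "a \<in> arr (prodR H)" and b: "b \<in> arr (prodR H)" and e: "F a = F b"
    obtain g k m where a': "a = (g,(k,m))" by (cases a) auto
    obtain h k' m' where b': "b = (h,(k',m'))" by (cases b) auto
    have g: "g \<in> arr H" and h: "h \<in> arr H" using a b a' b' aP by auto
    obtain x1 k1 y1 where f1: "f g = (x1,k1,y1)" by (cases "f g") auto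
    obtain x2 k2 y2 where f2: "f h = (x2,k2,y2)" by (cases "f h") auto
    have "pre k x1 = pre k' x2" "k1 + int k - int m = k2 + int k' - int m'" "pre m y1 = pre m' y2"
      using e by (simp_all add: a' b' Fs phi_simp f1 f2)
    then have kk: "k = k'" "x1 = x2" "m = m'" "y1 = y2" using pre_inj by blast+
    then have "k1 = k2" using \<open>k1 + int k - int m = k2 + int k' - int m'\<close> by simp
    note kk = kk this
    have "f g = f h" using f1 f2 kk by simp
    then have "g = h" using inj_onD[OF fi _ g h] by blast
    then show "a = b" using a' b' \<open>k = k'\<close> \<open>m = m'\<close> by simp
  qed
  have cf: "continuous_map (gtop H) (gtop GE2) f" using fl unfolding local_homeo_def by (rule conjunct1)
  have "local_homeo ?P (gtop GE2) F"
  proof (rule local_homeo_intro)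
    show "F ` topspace ?P \<subseteq> topspace (gtop GE2)"
    proof
      fix z assume "z \<in> F ` topspace ?P"
      then obtain a where a: "a \<in> topspace ?P" "z = F a" by blast
      then obtain h m n where h: "h \<in> topspace (gtop H)" and z: "z = F (h,(m,n))" by (cases a) auto
      have "f h \<in> arr GE2" using cf h topspaceT unfolding continuous_map_def by auto
      then show "z \<in> topspace (gtop GE2)" using z Fs phi_arr topspaceT by simp
    qed
    fix z assume "z \<in> topspace ?P"
    then obtain h m n where z: "z = (h,(m,n))" and h: "h \<in> topspace (gtop H)" by (cases z) auto
    obtain U where U: "openin (gtop H) U" "h \<in> U" "openin (gtop GE2) (f ` U)"
      "homeomorphic_map (subtopology (gtop H) U) (subtopology (gtop GE2) (f ` U)) f"
      using fl h unfolding local_homeo_def by blast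
    define W where "W = U \<times> {(m,n)}"
    have "F ` W = (phi m n \<circ> (f \<circ> fst)) ` W" by (rule image_cong) (auto simp: W_def Fs)
    also have "\<dots> = phi m n ` f ` U"
    proof -
      have fW: "fst ` W = U" unfolding W_def by force
      show ?thesis unfolding fW[symmetric] by (simp only: image_comp o_assoc)
    qed
    finally have FW: "F ` W = phi m n ` f ` U" .
    have Wo: "openin ?P W" unfolding W_def openin_prod_Times_iff using U(1) by simp
    have h1: "homeomorphic_map (subtopology ?P W) (subtopology (gtop H) U) fst"
      using homeo_sing[of "(m,n)" "discrete_topology UNIV" "gtop H" U] homeomorphic_maps_map
      unfolding W_def by auto
    have comp: "homeomorphic_map (subtopology ?P W) (subtopology (gtop GE2) (phi m n ` f ` U)) (phi m n \<circ> (f \<circ> fst))"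
      by (rule homeomorphic_map_compose[OF homeomorphic_map_compose[OF h1 U(4)] homeo_phi[OF U(3)]])
    have hm: "homeomorphic_map (subtopology ?P W) (subtopology (gtop GE2) (F ` W)) F"
      unfolding FW by (rule homeomorphic_map_eq[OF comp]) (auto simp: W_def Fs)
    show "\<exists>U. openin ?P U \<and> z \<in> U \<and> openin (gtop GE2) (F ` U) \<and>
        homeomorphic_map (subtopology ?P U) (subtopology (gtop GE2) (F ` U)) F"
      apply (rule exI[of _ W])
      using Wo z U(2) W_def FW open_phi[OF U(3)] hm by simp
  qed
  then have lh: "local_homeo (gtop (prodR H)) (gtop GE2) F" using gP by simp
  show "embeds (prodR H) GE2" unfolding embeds_def using hom inj lh by blast
  }
  {
  assume "embeds (prodR H) GE2"
  then obtain E where Eh: "gpd_hom (prodR H) GE2 E" and Ei: "inj_on E (arr (prodR H))"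
    and El: "local_homeo (gtop (prodR H)) (gtop GE2) E" unfolding embeds_def by blast
  define i where "i = (\<lambda>g::'a. (g, (0::nat, 0::nat)))"
  have il: "local_homeo (gtop H) (gtop (prodR H)) i"
    unfolding gP
  proof (rule local_homeo_intro)
    show "i ` topspace (gtop H) \<subseteq> topspace ?P" by (auto simp: i_def)
    fix x assume x: "x \<in> topspace (gtop H)"
    have e: "i ` topspace (gtop H) = topspace (gtop H) \<times> {(0,0)}" by (auto simp: i_def)
    have o: "openin ?P (topspace (gtop H) \<times> {(0,0)})" by (simp add: openin_prod_Times_iff)
    have hm: "homeomorphic_map (subtopology (gtop H) (topspace (gtop H))) (subtopology ?P (topspace (gtop H) \<times> {(0,0)})) i"
      using homeo_sing[of "(0,0)" "discrete_topology UNIV" "gtop H" "topspace (gtop H)"] homeomorphic_maps_map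
      unfolding i_def by auto
    show "\<exists>U. openin (gtop H) U \<and> x \<in> U \<and> openin ?P (i ` U) \<and>
        homeomorphic_map (subtopology (gtop H) U) (subtopology ?P (i ` U)) i"
      apply (rule exI[of _ "topspace (gtop H)"])
      using x e o hm by simp
  qed
  have iarr: "i ` arr H \<subseteq> arr (prodR H)" by (auto simp: i_def prodR_def)
  have hom: "gpd_hom H GE2 (E \<circ> i)"
    unfolding gpd_hom_def
  proof (intro conjI)
    have "E ` arr (prodR H) \<subseteq> arr GE2" using Eh unfolding gpd_hom_def by (rule conjunct1)
    then show "(E \<circ> i) ` arr H \<subseteq> arr GE2" using iarr by (auto simp: image_comp[symmetric])
    show "\<forall>(g,h) \<in> composable H. dom GE2 ((E \<circ> i) g) = cod GE2 ((E \<circ> i) h) \<and>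
        (E \<circ> i) (cmp H g h) = cmp GE2 ((E \<circ> i) g) ((E \<circ> i) h)"
    proof clarify
      fix g h assume c: "(g,h) \<in> composable H"
      then have "(i g, i h) \<in> composable (prodR H)" by (simp add: composable_def prodR_def i_def)
      moreover have "cmp (prodR H) (i g) (i h) = i (cmp H g h)" by (simp add: prodR_def i_def)
      ultimately show "dom GE2 ((E \<circ> i) g) = cod GE2 ((E \<circ> i) h) \<and>
          (E \<circ> i) (cmp H g h) = cmp GE2 ((E \<circ> i) g) ((E \<circ> i) h)"
        using Eh unfolding gpd_hom_def by auto
    qed
  qed
  have inj: "inj_on (E \<circ> i) (arr H)"
  proof (rule comp_inj_on)
    show "inj_on i (arr H)" by (simp add: inj_on_def i_def)
    show "inj_on E (i ` arr H)" using Ei iarr by (rule inj_on_subset)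
  qed
  show "embeds H GE2" unfolding embeds_def using hom inj local_homeo_compose[OF il El] by blast
  }
qed

end
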